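(* Let $(X,\phi)$ be a dynamical system with $X$ locally compact metrizable and $\phi$ a homeomorphism, let $\mathcal A = C_0(X)\times_\phi \mathbb Z_+$ be its semicrossed product, and let $(X_\gamma)_{\gamma\le\gamma_0}$ be the transfinite sequence of sets of iterated non-wandering points defined below. For each ordinal $\gamma\le\gamma_0$ let $$\mathcal I_\gamma = \{A\in\mathcal A : E_0(A)=0,\ E_n(A)(x)=0 \text{ for all } x\in X_\gamma \text{ and all integers } n\ge 1\}.$$ If $\gamma\le\gamma_0$ is a limit ordinal, then $\mathcal I_\gamma = \overline{\bigcup_{\beta<\gamma}\mathcal I_\beta}$ (closure in the norm of $\mathcal A$).
   Context: Semicrossed product: let $X$ be a locally compact metrizable space and $\phi:X\to X$ a homeomorphism; set $\alpha_n(f)=f\circ\phi^n$ for $f\in C_0(X)$, $n\in\mathbb Z_+$. On $\ell^1(\mathbb Z_+,C_0(X))$, whose elements are written as formal series $\sum_{n\ge0}U^nf_n$ with norm $\sum_n\|f_n\|_\infty$, define multiplication by $U^nf\,U^mg=U^{n+m}(\alpha_m(f)g)$ extended by linearity and continuity. Fix a faithful nondegenerate representation of $C_0(X)$ on a Hilbert space $\mathcal H_0$ and represent $\ell^1(\mathbb Z_+,C_0(X))$ on $\mathcal H_0\otimes\ell^2(\mathbb Z_+)$ by $\pi(U^nf)(\xi\otimes e_k)=\alpha_k(f)\xi\otimes e_{k+n}$. The semicrossed product $\mathcal A=C_0(X)\times_\phi\mathbb Z_+$ is the operator-norm closure of the image (independent of the choice of $\mathcal H_0$ up to isometric isomorphism).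 The Fourier coefficient maps $E_n(\sum_m U^mf_m)=f_n$ are contractive in the operator norm and extend to contractions $E_n:\mathcal A\to C_0(X)$; an element $A\in\mathcal A$ is $0$ iff $E_n(A)=0$ for all $n$. Iterated non-wandering sets: a set $Y\subseteq X$ is wandering if $\phi^m(Y)\cap\phi^n(Y)=\emptyset$ for all $m\ne n$ in $\mathbb Z_+$; a point is wandering if it has an open wandering neighbourhood, otherwise non-wandering. Let $X_1$ be the set of non-wandering points of $(X,\phi)$ and $\phi_1=\phi|_{X_1}$. Recursively, $X_{\gamma+1}$ is the set of non-wandering points of the system $(X_\gamma,\phi_\gamma)$ and $\phi_{\gamma+1}=\phi|_{X_{\gamma+1}}$; for a limit ordinal $\gamma$, $X_\gamma=\bigcap_{\beta<\gamma}X_\beta$ and $\phi_\gamma=\phi|_{X_\gamma}$. This process stabilizes at some ordinal $\gamma_0$. (Convention: $X_0 = X$.) *)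

theory Defs
  imports "HOL-Analysis.Analysis"
begin

definition wandering_set :: "('a \<Rightarrow> 'a) \<Rightarrow> 'a set \<Rightarrow> bool" where
  "wandering_set \<phi> V \<longleftrightarrow>
     (\<forall>m n. m \<noteq> n \<longrightarrow> (\<phi> ^^ m) ` V \<inter> (\<phi> ^^ n) ` V = {})"

definition nonwandering :: "('a::topological_space \<Rightarrow> 'a) \<Rightarrow> 'a set \<Rightarrow> 'a set" where
  "nonwandering \<phi> Y =
     {y \<in> Y. \<not> (\<exists>V. openin (top_of_set Y) V \<and> y \<in> V \<and> wandering_set \<phi> V)}"

text \<open>Ordinal-like notions in a well-order (the index type plays the role of an
  initial segment of the ordinals).\<close>
definition is_succ_of :: "'o::wellorder \<Rightarrow> 'o \<Rightarrow> bool" where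
  "is_succ_of i j \<longleftrightarrow> j < i \<and> (\<forall>k. \<not> (j < k \<and> k < i))"

definition is_limit :: "'o::wellorder \<Rightarrow> bool" where
  "is_limit i \<longleftrightarrow> (\<exists>j. j < i) \<and> (\<forall>j<i. \<exists>k. j < k \<and> k < i)"

definition iterated_nonwandering :: "('a::topological_space \<Rightarrow> 'a) \<Rightarrow> ('o::wellorder \<Rightarrow> 'a set) \<Rightarrow> bool" where
  "iterated_nonwandering \<phi> Xs \<longleftrightarrow>
     (\<forall>i. (\<forall>j. \<not> j < i) \<longrightarrow> Xs i = UNIV) \<and>
     (\<forall>i j. is_succ_of i j \<longrightarrow> Xs i = nonwandering \<phi> (Xs j)) \<and>
     (\<forall>i. is_limit i \<longrightarrow> Xs i = (\<Inter>j\<in>{j. j < i}. Xs j))"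

definition C0 :: "('a::topological_space \<Rightarrow> complex) set" where
  "C0 = {f. continuous_on UNIV f \<and>
           (\<forall>e>0. \<exists>K. compact K \<and> (\<forall>x. x \<notin> K \<longrightarrow> cmod (f x) < e))}"

text \<open>An element of the semicrossed product is represented by its sequence of Fourier
  coefficients F n = E_n(A). Its operator is computed in the (faithful, nondegenerate)
  representation of C_0(X) on l^2(X) by multiplication; this splits into the orbit
  representations pi_x on l^2(Z_+), whose matrix is\<close>
definition sc_entry :: "('a \<Rightarrow> 'a) \<Rightarrow> (nat \<Rightarrow> 'a \<Rightarrow> complex) \<Rightarrow> 'a \<Rightarrow> nat \<Rightarrow> nat \<Rightarrow> complex" where
  "sc_entry \<phi> F x j k = (if k \<le> j then F (j - k) ((\<phi> ^^ k) x) else 0)"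

text \<open>Operator norm (possibly infinite), as supremum over finite sections / finitely
  supported unit vectors, and over all points x.\<close>
definition sc_norm :: "('a \<Rightarrow> 'a) \<Rightarrow> (nat \<Rightarrow> 'a \<Rightarrow> complex) \<Rightarrow> ereal" where
  "sc_norm \<phi> F =
     (SUP x. SUP N. SUP M. SUP v \<in> {v :: nat \<Rightarrow> complex. (\<Sum>k<N. (cmod (v k))\<^sup>2) \<le> 1}.
        ereal (sqrt (\<Sum>j<M. (cmod (\<Sum>k<N. sc_entry \<phi> F x j k * v k))\<^sup>2)))"

definition sc_poly :: "(nat \<Rightarrow> 'a::topological_space \<Rightarrow> complex) \<Rightarrow> bool" where
  "sc_poly P \<longleftrightarrow> finite {n. P n \<noteq> (\<lambda>_. 0)} \<and> (\<forall>n. P n \<in> C0)"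

text \<open>The semicrossed product: norm closure of the polynomials sum U^n f_n.\<close>
definition semicrossed :: "('a::topological_space \<Rightarrow> 'a) \<Rightarrow> (nat \<Rightarrow> 'a \<Rightarrow> complex) set" where
  "semicrossed \<phi> =
     {F. \<forall>e>0. \<exists>P. sc_poly P \<and> sc_norm \<phi> (\<lambda>n y. F n y - P n y) < ereal e}"

definition sc_closure :: "('a::topological_space \<Rightarrow> 'a) \<Rightarrow> (nat \<Rightarrow> 'a \<Rightarrow> complex) set \<Rightarrow> (nat \<Rightarrow> 'a \<Rightarrow> complex) set" where
  "sc_closure \<phi> S =
     {F \<in> semicrossed \<phi>. \<forall>e>0. \<exists>G\<in>S. sc_norm \<phi> (\<lambda>n y. F n y - G n y) < ereal e}"

definition sc_ideal :: "('a::topological_space \<Rightarrow> 'a) \<Rightarrow> 'a set \<Rightarrow> (nat \<Rightarrow> 'a \<Rightarrow> complex) set" where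
  "sc_ideal \<phi> Y =
     {F \<in> semicrossed \<phi>. F 0 = (\<lambda>_. 0) \<and> (\<forall>n\<ge>1. \<forall>x\<in>Y. F n x = 0)}"

end

theory Submission
  imports Defs
begin


lemma wcs:
  fixes w u :: "'i \<Rightarrow> real"
  assumes "\<And>i. i \<in> I \<Longrightarrow> 0 \<le> w i"
  shows "(\<Sum>i\<in>I. w i * u i)\<^sup>2 \<le> (\<Sum>i\<in>I. w i) * (\<Sum>i\<in>I. w i * (u i)\<^sup>2)"
proof -
  have "(\<Sum>i\<in>I. w i * u i) = (\<Sum>i\<in>I. sqrt (w i) * (sqrt (w i) * u i))"
    by (rule sum.cong) (auto simp: assms real_sqrt_mult_self mult.assoc[symmetric])
  also have "(\<dots>)\<^sup>2 \<le> (\<Sum>i\<in>I. (sqrt (w i))\<^sup>2) * (\<Sum>i\<in>I. (sqrt (w i) * u i)\<^sup>2)"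
    by (rule Cauchy_Schwarz_ineq_sum)
  also have "\<dots> = (\<Sum>i\<in>I. w i) * (\<Sum>i\<in>I. w i * (u i)\<^sup>2)"
    using assms by (simp add: power_mult_distrib)
  finally show ?thesis .
qed

lemma sq_le: "sqrt X \<le> c \<Longrightarrow> 0 \<le> X \<Longrightarrow> X \<le> c\<^sup>2"
proof -
  assume a: "sqrt X \<le> c" "0 \<le> X"
  have "X = (sqrt X)\<^sup>2" using a by simp
  also have "\<dots> \<le> c\<^sup>2" by (rule power_mono[OF a(1)]) (simp add: a(2))
  finally show ?thesis .
qed

definition row :: "('a \<Rightarrow> 'a) \<Rightarrow> (nat \<Rightarrow> 'a \<Rightarrow> complex) \<Rightarrow> 'a \<Rightarrow> nat \<Rightarrow> (nat \<Rightarrow> complex) \<Rightarrow> nat \<Rightarrow> complex" where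
  "row \<phi> F x N v j = (\<Sum>k<N. sc_entry \<phi> F x j k * v k)"

definition bnd :: "('a \<Rightarrow> 'a) \<Rightarrow> (nat \<Rightarrow> 'a \<Rightarrow> complex) \<Rightarrow> real \<Rightarrow> bool" where
  "bnd \<phi> F c \<longleftrightarrow> (\<forall>x N M v. (\<Sum>k<N. (cmod (v k))\<^sup>2) \<le> 1 \<longrightarrow>
      sqrt (\<Sum>j<M. (cmod (row \<phi> F x N v j))\<^sup>2) \<le> c)"

definition bnd2 :: "('a \<Rightarrow> 'a) \<Rightarrow> (nat \<Rightarrow> 'a \<Rightarrow> complex) \<Rightarrow> real \<Rightarrow> bool" where
  "bnd2 \<phi> F c \<longleftrightarrow> (\<forall>x N M v. (\<Sum>j<M. (cmod (row \<phi> F x N v j))\<^sup>2) \<le> c\<^sup>2 * (\<Sum>k<N. (cmod (v k))\<^sup>2))"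

lemma bnd2_bnd:
  assumes "bnd2 \<phi> F c" "0 \<le> c" shows "bnd \<phi> F c"
  unfolding bnd_def
proof (intro allI impI)
  fix x and N M :: nat and v :: "nat \<Rightarrow> complex"
  assume h: "(\<Sum>k<N. (cmod (v k))\<^sup>2) \<le> 1"
  have "(\<Sum>j<M. (cmod (row \<phi> F x N v j))\<^sup>2) \<le> c\<^sup>2 * (\<Sum>k<N. (cmod (v k))\<^sup>2)"
    using assms(1)[unfolded bnd2_def, rule_format, where x=x and N=N and M=M and v=v] .
  also have "\<dots> \<le> c\<^sup>2" by (rule mult_left_le[OF h]) simp
  finally have "sqrt (\<Sum>j<M. (cmod (row \<phi> F x N v j))\<^sup>2) \<le> sqrt (c\<^sup>2)"
    by (rule real_sqrt_le_mono)
  thus "sqrt (\<Sum>j<M. (cmod (row \<phi> F x N v j))\<^sup>2) \<le> c" using assms(2) by simp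
qed

lemma row_scale: "row \<phi> F x N (\<lambda>k. t * v k) j = t * row \<phi> F x N v j"
  unfolding row_def sum_distrib_left by (rule sum.cong) (simp_all add: mult_ac)

lemma bnd_nonneg: "bnd \<phi> F c \<Longrightarrow> 0 \<le> c"
proof -
  assume "bnd \<phi> F c"
  from this[unfolded bnd_def, rule_format, where x=undefined and N=0 and M=0 and v="\<lambda>_. 0"] show ?thesis by simp
qed

lemma bnd_bnd2:
  assumes b: "bnd \<phi> F c" shows "bnd2 \<phi> F c"
  unfolding bnd2_def
proof (intro allI)
  fix x and N M :: nat and v :: "nat \<Rightarrow> complex"
  define s where "s = (\<Sum>k<N. (cmod (v k))\<^sup>2)"
  have c0: "0 \<le> c" using bnd_nonneg[OF b] .
  have s0: "0 \<le> s" unfolding s_def by (simp add: sum_nonneg)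
  show "(\<Sum>j<M. (cmod (row \<phi> F x N v j))\<^sup>2) \<le> c\<^sup>2 * s"
  proof (cases "s = 0")
    case True
    hence "\<forall>k\<in>{..<N}. (cmod (v k))\<^sup>2 = 0" unfolding s_def
      by (subst sum_nonneg_eq_0_iff[symmetric]) auto
    hence "\<And>j. row \<phi> F x N v j = 0" unfolding row_def by (auto intro!: sum.neutral)
    thus ?thesis using True by simp
  next
    case False
    hence sp: "s > 0" using s0 by simp
    define t where "t = sqrt s"
    have tp: "t > 0" using sp t_def by simp
    have tt: "t\<^sup>2 = s" using s0 t_def by simp
    have "(\<Sum>k<N. (cmod (complex_of_real (1/t) * v k))\<^sup>2) = (\<Sum>k<N. (cmod (v k))\<^sup>2) / t\<^sup>2"
      using tp by (simp add: norm_divide power_divide sum_divide_distrib)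
    also have "\<dots> = 1" using tt sp s_def by simp
    finally have "sqrt (\<Sum>j<M. (cmod (row \<phi> F x N (\<lambda>k. complex_of_real (1/t) * v k) j))\<^sup>2) \<le> c"
      using b unfolding bnd_def by simp
    hence "(\<Sum>j<M. (cmod (row \<phi> F x N (\<lambda>k. complex_of_real (1/t) * v k) j))\<^sup>2) \<le> c\<^sup>2"
      by (rule sq_le) (simp add: sum_nonneg)
    moreover have "(\<Sum>j<M. (cmod (row \<phi> F x N (\<lambda>k. complex_of_real (1/t) * v k) j))\<^sup>2)
       = (\<Sum>j<M. (cmod (row \<phi> F x N v j))\<^sup>2) / t\<^sup>2"
      unfolding row_scale norm_mult using tp by (simp add: power_mult_distrib sum_divide_distrib power_divide norm_divide)
    ultimately have "(\<Sum>j<M. (cmod (row \<phi> F x N v j))\<^sup>2) / t\<^sup>2 \<le> c\<^sup>2" by simp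
    thus ?thesis using tp tt sp by (simp add: pos_divide_le_eq mult_ac)
  qed
qed



lemma row_add: "row \<phi> (\<lambda>n y. F n y + G n y) x N v j = row \<phi> F x N v j + row \<phi> G x N v j"
  unfolding row_def sum.distrib[symmetric] by (rule sum.cong) (auto simp: sc_entry_def distrib_right)

lemma row_neg: "row \<phi> (\<lambda>n y. - F n y) x N v j = - row \<phi> F x N v j"
  unfolding row_def sum_negf[symmetric] by (rule sum.cong) (auto simp: sc_entry_def)

lemma row_zero: "row \<phi> (\<lambda>n y. 0) x N v j = 0"
  unfolding row_def by (rule sum.neutral) (auto simp: sc_entry_def)

lemma bnd_add:
  assumes "bnd \<phi> F a" "bnd \<phi> G b"
  shows "bnd \<phi> (\<lambda>n y. F n y + G n y) (a + b)"
  unfolding bnd_def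
proof (intro allI impI)
  fix x and N M :: nat and v :: "nat \<Rightarrow> complex"
  assume h: "(\<Sum>k<N. (cmod (v k))\<^sup>2) \<le> 1"
  have "sqrt (\<Sum>j<M. (cmod (row \<phi> (\<lambda>n y. F n y + G n y) x N v j))\<^sup>2)
      = L2_set (\<lambda>j. cmod (row \<phi> F x N v j + row \<phi> G x N v j)) {..<M}"
    unfolding L2_set_def row_add ..
  also have "\<dots> \<le> L2_set (\<lambda>j. cmod (row \<phi> F x N v j) + cmod (row \<phi> G x N v j)) {..<M}"
    by (rule L2_set_mono) (auto intro: norm_triangle_ineq)
  also have "\<dots> \<le> L2_set (\<lambda>j. cmod (row \<phi> F x N v j)) {..<M} + L2_set (\<lambda>j. cmod (row \<phi> G x N v j)) {..<M}"
    by (rule L2_set_triangle_ineq)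
  also have "\<dots> \<le> a + b"
    using assms h unfolding bnd_def L2_set_def by (intro add_mono) blast+
  finally show "sqrt (\<Sum>j<M. (cmod (row \<phi> (\<lambda>n y. F n y + G n y) x N v j))\<^sup>2) \<le> a + b" .
qed

lemma bnd_neg: "bnd \<phi> F a \<Longrightarrow> bnd \<phi> (\<lambda>n y. - F n y) a"
  unfolding bnd_def row_neg norm_minus_cancel .

lemma bnd_zero: "bnd \<phi> (\<lambda>n y. 0) 0"
  unfolding bnd_def row_zero by simp

lemma norm_lt_bnd:
  assumes "sc_norm \<phi> F < ereal e" shows "bnd \<phi> F e"
  unfolding bnd_def
proof (intro allI impI)
  fix x and N M :: nat and v :: "nat \<Rightarrow> complex"
  assume h: "(\<Sum>k<N. (cmod (v k))\<^sup>2) \<le> 1"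
  have "ereal (sqrt (\<Sum>j<M. (cmod (row \<phi> F x N v j))\<^sup>2)) \<le> sc_norm \<phi> F"
    unfolding sc_norm_def row_def
    by (rule SUP_upper2[of x], simp, rule SUP_upper2[of N], simp, rule SUP_upper2[of M], simp,
        rule SUP_upper2[of v]) (auto simp: h)
  hence "ereal (sqrt (\<Sum>j<M. (cmod (row \<phi> F x N v j))\<^sup>2)) < ereal e" using assms by (rule order_le_less_trans)
  thus "sqrt (\<Sum>j<M. (cmod (row \<phi> F x N v j))\<^sup>2) \<le> e" by simp
qed

lemma bnd_norm_le:
  assumes "bnd \<phi> F c" shows "sc_norm \<phi> F \<le> ereal c"
  unfolding sc_norm_def
  by (intro SUP_least) (use assms in \<open>auto simp: bnd_def row_def\<close>)

lemma bnd_coeff: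
  assumes "bnd \<phi> F c" shows "cmod (F n x) \<le> c"
proof -
  define v0 :: "nat \<Rightarrow> complex" where "v0 = (\<lambda>k. if k = 0 then 1 else 0)"
  have r: "row \<phi> F x 1 v0 j = F j x" for j
    unfolding row_def v0_def sc_entry_def by simp
  have "(\<Sum>k<1. (cmod (v0 k))\<^sup>2) \<le> 1" unfolding v0_def by simp
  hence "sqrt (\<Sum>j<Suc n. (cmod (row \<phi> F x 1 v0 j))\<^sup>2) \<le> c"
    using assms unfolding bnd_def by blast
  hence s: "sqrt (\<Sum>j<Suc n. (cmod (F j x))\<^sup>2) \<le> c" unfolding r .
  have "(cmod (F n x))\<^sup>2 \<le> (\<Sum>j<Suc n. (cmod (F j x))\<^sup>2)"
    by (rule member_le_sum) auto
  hence "sqrt ((cmod (F n x))\<^sup>2) \<le> sqrt (\<Sum>j<Suc n. (cmod (F j x))\<^sup>2)"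
    by (rule real_sqrt_le_mono)
  thus ?thesis using s by simp
qed



lemma reidx_le:
  fixes b :: "nat \<Rightarrow> real"
  assumes "finite A" "inj_on g A" "g ` A \<subseteq> {..<D}" "\<And>n. 0 \<le> b n"
  shows "(\<Sum>a\<in>A. b (g a)) \<le> (\<Sum>n<D. b n)"
proof -
  have "(\<Sum>a\<in>A. b (g a)) = (\<Sum>n\<in>g ` A. b n)" using assms(2) by (simp add: sum.reindex)
  also have "\<dots> \<le> (\<Sum>n<D. b n)" by (rule sum_mono2) (use assms in auto)
  finally show ?thesis .
qed

lemma schur:
  fixes b :: "nat \<Rightarrow> real"
  assumes bQ: "\<And>n y. cmod (Q n y) \<le> b n" and b0: "\<And>n. 0 \<le> b n"
    and bD: "\<And>n. D \<le> n \<Longrightarrow> b n = 0" and bB: "(\<Sum>n<D. b n) \<le> B"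
  shows "bnd2 \<phi> Q B"
  unfolding bnd2_def
proof (intro allI)
  fix x and N M :: nat and v :: "nat \<Rightarrow> complex"
  define w where "w j k = (if k \<le> j \<and> j - k < D then b (j - k) else 0)" for j k
  have w0: "0 \<le> w j k" for j k unfolding w_def using b0 by auto
  have B0: "0 \<le> B" using bB b0 by (meson order_trans sum_nonneg)
  have Qz: "D \<le> n \<Longrightarrow> Q n y = 0" for n y using bQ[of n y] bD[of n] by simp
  have ent: "cmod (sc_entry \<phi> Q x j k) \<le> w j k" for j k
    unfolding sc_entry_def w_def using bQ Qz by (auto simp: not_less)
  have rs: "(\<Sum>k<N. w j k) \<le> B" for j
  proof -
    have "(\<Sum>k<N. w j k) = (\<Sum>k\<in>{k\<in>{..<N}. k \<le> j \<and> j - k < D}. b (j - k))"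
      unfolding w_def sum.inter_filter[OF finite_lessThan] ..
    also have "\<dots> \<le> (\<Sum>n<D. b n)"
      by (rule reidx_le) (auto simp: inj_on_def b0)
    finally show ?thesis using bB by linarith
  qed
  have cs: "(\<Sum>j<M. w j k) \<le> B" for k
  proof -
    have "(\<Sum>j<M. w j k) = (\<Sum>j\<in>{j\<in>{..<M}. k \<le> j \<and> j - k < D}. b (j - k))"
      unfolding w_def sum.inter_filter[OF finite_lessThan] ..
    also have "\<dots> \<le> (\<Sum>n<D. b n)"
      by (rule reidx_le) (auto simp: inj_on_def b0)
    finally show ?thesis using bB by linarith
  qed
  have rj: "(cmod (row \<phi> Q x N v j))\<^sup>2 \<le> B * (\<Sum>k<N. w j k * (cmod (v k))\<^sup>2)" for j
  proof -
    have "cmod (row \<phi> Q x N v j) \<le> (\<Sum>k<N. cmod (sc_entry \<phi> Q x j k * v k))"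
      unfolding row_def by (rule norm_sum)
    also have "\<dots> \<le> (\<Sum>k<N. w j k * cmod (v k))"
      by (rule sum_mono) (simp add: norm_mult mult_right_mono ent)
    finally have a: "cmod (row \<phi> Q x N v j) \<le> (\<Sum>k<N. w j k * cmod (v k))" .
    have "(cmod (row \<phi> Q x N v j))\<^sup>2 \<le> (\<Sum>k<N. w j k * cmod (v k))\<^sup>2"
      by (rule power_mono[OF a]) simp
    also have "\<dots> \<le> (\<Sum>k<N. w j k) * (\<Sum>k<N. w j k * (cmod (v k))\<^sup>2)"
      by (rule wcs) (simp add: w0)
    also have "\<dots> \<le> B * (\<Sum>k<N. w j k * (cmod (v k))\<^sup>2)"
      by (rule mult_right_mono[OF rs]) (simp add: sum_nonneg w0)
    finally show ?thesis .
  qed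
  have "(\<Sum>j<M. (cmod (row \<phi> Q x N v j))\<^sup>2) \<le> (\<Sum>j<M. B * (\<Sum>k<N. w j k * (cmod (v k))\<^sup>2))"
    by (rule sum_mono) (rule rj)
  also have "\<dots> = B * (\<Sum>k<N. (cmod (v k))\<^sup>2 * (\<Sum>j<M. w j k))"
    by (simp add: sum_distrib_left sum_distrib_right sum.swap[of _ "{..<M}"] mult_ac)
  also have "\<dots> \<le> B * (\<Sum>k<N. (cmod (v k))\<^sup>2 * B)"
    by (intro mult_left_mono sum_mono mult_left_mono B0 cs) simp_all
  also have "\<dots> = B\<^sup>2 * (\<Sum>k<N. (cmod (v k))\<^sup>2)"
    by (simp add: sum_distrib_left sum_distrib_right power2_eq_square mult_ac)
  finally show "(\<Sum>j<M. (cmod (row \<phi> Q x N v j))\<^sup>2) \<le> B\<^sup>2 * (\<Sum>k<N. (cmod (v k))\<^sup>2)" .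
qed



definition fc :: "nat \<Rightarrow> nat \<Rightarrow> real" where
  "fc K n = (if n \<le> K then 1 - real n / real (Suc K) else 0)"

definition ind :: "nat \<Rightarrow> nat \<Rightarrow> nat \<Rightarrow> real" where
  "ind K s k = (if k \<le> s \<and> s \<le> k + K then 1 else 0)"

lemma ind_sum_le: "(\<Sum>s<S. ind K s k) \<le> real (Suc K)"
proof -
  have "(\<Sum>s<S. ind K s k) = (\<Sum>s\<in>{s\<in>{..<S}. k \<le> s \<and> s \<le> k + K}. 1)"
    unfolding ind_def sum.inter_filter[OF finite_lessThan] ..
  also have "\<dots> \<le> (\<Sum>s\<in>{k..k+K}. 1)" by (rule sum_mono2) auto
  also have "\<dots> = real (Suc K)" by simp
  finally show ?thesis .
qed

lemma fc_ident:
  assumes "k \<le> j" "k + K < S"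
  shows "real (Suc K) * fc K (j - k) = (\<Sum>s<S. ind K s j * ind K s k)"
proof -
  have "(\<Sum>s<S. ind K s j * ind K s k) = (\<Sum>s<S. if j \<le> s \<and> s \<le> k + K then 1 else 0)"
    by (rule sum.cong) (use assms in \<open>auto simp: ind_def\<close>)
  also have "\<dots> = (\<Sum>s\<in>{s\<in>{..<S}. j \<le> s \<and> s \<le> k + K}. 1)"
    unfolding sum.inter_filter[OF finite_lessThan] ..
  also have "{s\<in>{..<S}. j \<le> s \<and> s \<le> k + K} = {j..k+K}" using assms by auto
  finally have e: "(\<Sum>s<S. ind K s j * ind K s k) = real (card {j..k+K})" by simp
  show ?thesis
  proof (cases "j - k \<le> K")
    case True
    hence "card {j..k+K} = Suc (k + K) - j" by simp
    moreover have "real (Suc (k + K) - j) = real (Suc K) - real (j - k)" using True assms by (simp add: of_nat_diff)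
    ultimately show ?thesis using True unfolding e fc_def by (simp add: field_simps)
  next
    case False
    hence "{j..k+K} = {}" by auto
    thus ?thesis using False unfolding e fc_def by simp
  qed
qed

lemma fejer:
  assumes F: "bnd2 \<phi> F c"
  shows "bnd2 \<phi> (\<lambda>n y. complex_of_real (fc K n) * F n y) c"
  unfolding bnd2_def
proof (intro allI)
  fix x and N M :: nat and v :: "nat \<Rightarrow> complex"
  define S where "S = N + K + 1"
  define vs where "vs s k = complex_of_real (ind K s k) * v k" for s k
  define r where "r s j = row \<phi> F x N (vs s) j" for s j
  define q where "q = 1 / real (Suc K)"
  have q0: "0 < q" unfolding q_def by simp
  have ind01: "ind K s k = 0 \<or> ind K s k = 1" for s k unfolding ind_def by auto
  have ind0: "0 \<le> ind K s k" for s k unfolding ind_def by auto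
  have rowid: "row \<phi> (\<lambda>n y. complex_of_real (fc K n) * F n y) x N v j
      = complex_of_real q * (\<Sum>s<S. complex_of_real (ind K s j) * r s j)" for j
  proof -
    have "sc_entry \<phi> (\<lambda>n y. complex_of_real (fc K n) * F n y) x j k * v k
        = complex_of_real q * (\<Sum>s<S. complex_of_real (ind K s j) * (sc_entry \<phi> F x j k * vs s k))"
      if k: "k < N" for k
    proof (cases "k \<le> j")
      case True
      have "real (Suc K) * fc K (j - k) = (\<Sum>s<S. ind K s j * ind K s k)"
        by (rule fc_ident) (use True k S_def in auto)
      hence "fc K (j - k) = q * (\<Sum>s<S. ind K s j * ind K s k)"
        unfolding q_def by (simp add: field_simps)
      hence "complex_of_real (fc K (j - k)) = complex_of_real q * (\<Sum>s<S. complex_of_real (ind K s j) * complex_of_real (ind K s k))"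
        by simp
      thus ?thesis using True unfolding sc_entry_def vs_def
        by (simp add: sum_distrib_left sum_distrib_right mult_ac)
    next
      case False
      thus ?thesis unfolding sc_entry_def by simp
    qed
    hence "row \<phi> (\<lambda>n y. complex_of_real (fc K n) * F n y) x N v j
       = (\<Sum>k<N. complex_of_real q * (\<Sum>s<S. complex_of_real (ind K s j) * (sc_entry \<phi> F x j k * vs s k)))"
      unfolding row_def by (intro sum.cong) auto
    also have "\<dots> = complex_of_real q * (\<Sum>s<S. complex_of_real (ind K s j) * r s j)"
      unfolding r_def row_def
      by (simp add: sum_distrib_left sum.swap[of _ "{..<N}"])
    finally show ?thesis .
  qed
  have bj: "(cmod (row \<phi> (\<lambda>n y. complex_of_real (fc K n) * F n y) x N v j))\<^sup>2
      \<le> q * (\<Sum>s<S. (cmod (r s j))\<^sup>2)" for j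
  proof -
    have "cmod (row \<phi> (\<lambda>n y. complex_of_real (fc K n) * F n y) x N v j)
        \<le> q * (\<Sum>s<S. ind K s j * cmod (r s j))"
    proof -
      have "cmod (\<Sum>s<S. complex_of_real (ind K s j) * r s j) \<le> (\<Sum>s<S. cmod (complex_of_real (ind K s j) * r s j))"
        by (rule norm_sum)
      also have "\<dots> = (\<Sum>s<S. ind K s j * cmod (r s j))"
        by (rule sum.cong) (simp_all add: norm_mult ind0)
      finally show ?thesis unfolding rowid using q0 by (simp add: norm_mult)
    qed
    hence "(cmod (row \<phi> (\<lambda>n y. complex_of_real (fc K n) * F n y) x N v j))\<^sup>2
        \<le> (q * (\<Sum>s<S. ind K s j * cmod (r s j)))\<^sup>2"
      by (rule power_mono) simp
    also have "\<dots> = q\<^sup>2 * (\<Sum>s<S. ind K s j * cmod (r s j))\<^sup>2" by (simp add: power_mult_distrib)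
    also have "\<dots> \<le> q\<^sup>2 * ((\<Sum>s<S. ind K s j) * (\<Sum>s<S. ind K s j * (cmod (r s j))\<^sup>2))"
      by (rule mult_left_mono) (simp_all add: wcs ind0)
    also have "\<dots> \<le> q\<^sup>2 * (real (Suc K) * (\<Sum>s<S. (cmod (r s j))\<^sup>2))"
    proof -
      have "(\<Sum>s<S. ind K s j * (cmod (r s j))\<^sup>2) \<le> (\<Sum>s<S. (cmod (r s j))\<^sup>2)"
      proof (rule sum_mono)
        fix s show "ind K s j * (cmod (r s j))\<^sup>2 \<le> (cmod (r s j))\<^sup>2" using ind01[of s j] by auto
      qed
      thus ?thesis
        by (intro mult_left_mono mult_mono ind_sum_le) (simp_all add: sum_nonneg ind0)
    qed
    also have "\<dots> = q * (\<Sum>s<S. (cmod (r s j))\<^sup>2)" unfolding q_def by (simp add: power2_eq_square)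
    finally show ?thesis .
  qed
  have "(\<Sum>j<M. (cmod (row \<phi> (\<lambda>n y. complex_of_real (fc K n) * F n y) x N v j))\<^sup>2)
      \<le> (\<Sum>j<M. q * (\<Sum>s<S. (cmod (r s j))\<^sup>2))" by (rule sum_mono) (rule bj)
  also have "\<dots> = q * (\<Sum>s<S. (\<Sum>j<M. (cmod (r s j))\<^sup>2))"
    by (simp add: sum_distrib_left sum.swap[of _ "{..<M}"])
  also have "\<dots> \<le> q * (\<Sum>s<S. c\<^sup>2 * (\<Sum>k<N. (cmod (vs s k))\<^sup>2))"
    using F unfolding bnd2_def r_def by (intro mult_left_mono sum_mono) (auto simp: q0 less_imp_le)
  also have "\<dots> = q * c\<^sup>2 * (\<Sum>k<N. (cmod (v k))\<^sup>2 * (\<Sum>s<S. ind K s k))"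
  proof -
    have "(cmod (vs s k))\<^sup>2 = ind K s k * (cmod (v k))\<^sup>2" for s k
      using ind01[of s k] unfolding vs_def by (auto simp: norm_mult)
    thus ?thesis by (simp add: sum_distrib_left sum_distrib_right sum.swap[of _ "{..<S}"] mult_ac)
  qed
  also have "\<dots> \<le> q * c\<^sup>2 * (\<Sum>k<N. (cmod (v k))\<^sup>2 * real (Suc K))"
    by (intro mult_left_mono sum_mono ind_sum_le) (simp_all add: q0 less_imp_le)
  also have "\<dots> = c\<^sup>2 * (\<Sum>k<N. (cmod (v k))\<^sup>2)"
    unfolding q_def by (simp add: sum_distrib_right[symmetric])
  finally show "(\<Sum>j<M. (cmod (row \<phi> (\<lambda>n y. complex_of_real (fc K n) * F n y) x N v j))\<^sup>2)
      \<le> c\<^sup>2 * (\<Sum>k<N. (cmod (v k))\<^sup>2)" .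
qed



lemma wo_cases: "(\<forall>j. \<not> j < i) \<or> (\<exists>j. is_succ_of i j) \<or> is_limit (i::'o::wellorder)"
  unfolding is_succ_of_def is_limit_def by blast

lemma nw_sub: "nonwandering \<phi> Y \<subseteq> Y"
  unfolding nonwandering_def by auto

lemma nw_closed:
  assumes "closed Y" shows "closed (nonwandering \<phi> Y)"
proof -
  define W where "W = \<Union>{V. openin (top_of_set Y) V \<and> wandering_set \<phi> V}"
  have oW: "openin (top_of_set Y) W" unfolding W_def by (rule openin_Union) auto
  hence WY: "W \<subseteq> Y" by (meson openin_imp_subset)
  have eq: "nonwandering \<phi> Y = Y - W" unfolding nonwandering_def W_def by blast
  have "closedin (top_of_set Y) (Y - W)"
    unfolding closedin_def using oW WY by (simp add: Diff_Diff_Int inf.absorb2)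
  thus ?thesis unfolding eq using assms closedin_closed_trans by blast
qed

lemma Xs_closed:
  assumes "iterated_nonwandering \<phi> Xs" shows "closed (Xs i)"
proof (induction i rule: less_induct)
  case (less i)
  from wo_cases[of i] show ?case
  proof (elim disjE exE)
    assume "\<forall>j. \<not> j < i" thus ?thesis using assms unfolding iterated_nonwandering_def by simp
  next
    fix j assume s: "is_succ_of i j"
    hence "Xs i = nonwandering \<phi> (Xs j)" using assms unfolding iterated_nonwandering_def by blast
    moreover have "j < i" using s unfolding is_succ_of_def by simp
    ultimately show ?thesis using less nw_closed by metis
  next
    assume l: "is_limit i"
    hence "Xs i = (\<Inter>j\<in>{j. j < i}. Xs j)" using assms unfolding iterated_nonwandering_def by blast
    thus ?thesis using less by (simp add: closed_INT)
  qed
qed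

lemma Xs_anti:
  assumes "iterated_nonwandering \<phi> Xs" shows "j \<le> i \<Longrightarrow> Xs i \<subseteq> Xs j"
proof (induction i arbitrary: j rule: less_induct)
  case (less i)
  show ?case
  proof (cases "j = i")
    case True thus ?thesis by simp
  next
    case False
    hence ji: "j < i" using less.prems by simp
    from wo_cases[of i] show ?thesis
    proof (elim disjE exE)
      assume "\<forall>j. \<not> j < i" thus ?thesis using ji by blast
    next
      fix i' assume s: "is_succ_of i i'"
      hence "Xs i = nonwandering \<phi> (Xs i')" using assms unfolding iterated_nonwandering_def by blast
      hence "Xs i \<subseteq> Xs i'" using nw_sub by blast
      moreover have "i' < i" "j \<le> i'" using s ji unfolding is_succ_of_def by (auto simp: not_less[symmetric])
      ultimately show ?thesis using less.IH by blast
    next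
      assume l: "is_limit i"
      hence "Xs i = (\<Inter>j\<in>{j. j < i}. Xs j)" using assms unfolding iterated_nonwandering_def by blast
      thus ?thesis using ji by blast
    qed
  qed
qed


lemma C0_bounded:
  assumes "f \<in> C0" shows "\<exists>B\<ge>0. \<forall>y. cmod (f y) \<le> B"
proof -
  have c: "continuous_on UNIV f" using assms unfolding C0_def by blast
  obtain K where K: "compact K" "\<forall>x. x \<notin> K \<longrightarrow> cmod (f x) < 1"
    using assms unfolding C0_def by (smt (verit) mem_Collect_eq)
  have "compact (f ` K)" using K(1) continuous_on_subset[OF c] by (intro compact_continuous_image) auto
  hence "bounded (f ` K)" by (rule compact_imp_bounded)
  then obtain B' where B': "\<And>z. z \<in> f ` K \<Longrightarrow> norm z \<le> B'" unfolding bounded_iff by blast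
  have "cmod (f y) \<le> max 1 B'" for y
  proof (cases "y \<in> K")
    case True thus ?thesis using B'[of "f y"] by simp
  next
    case False thus ?thesis using K(2) by (simp add: le_max_iff_disj less_imp_le)
  qed
  thus ?thesis by (intro exI[of _ "max 1 B'"]) simp
qed

lemma C0_dom:
  assumes "f \<in> C0" "continuous_on UNIV g" "\<And>y. cmod (g y) \<le> cmod (f y)"
  shows "g \<in> C0"
  unfolding C0_def mem_Collect_eq
proof (intro conjI assms(2) allI impI)
  fix e :: real assume "0 < e"
  then obtain K where K: "compact K" "\<forall>x. x \<notin> K \<longrightarrow> cmod (f x) < e"
    using assms(1) unfolding C0_def by blast
  show "\<exists>K. compact K \<and> (\<forall>x. x \<notin> K \<longrightarrow> cmod (g x) < e)"
    by (rule exI[of _ K]) (use K assms(3) le_less_trans in blast)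
qed


definition trunc :: "real \<Rightarrow> ('a \<Rightarrow> complex) \<Rightarrow> 'a \<Rightarrow> complex" where
  "trunc d f = (\<lambda>y. f y * complex_of_real (max 0 (cmod (f y) - d) / max (cmod (f y)) d))"

lemma trunc_cont:
  assumes "continuous_on UNIV f" "0 < d" shows "continuous_on UNIV (trunc d f)"
  unfolding trunc_def using assms
  by (intro continuous_intros) (auto simp: max_def)

lemma trunc_le: assumes "0 < d" shows "cmod (trunc d f y) \<le> cmod (f y)"
proof -
  have "max 0 (cmod (f y) - d) / max (cmod (f y)) d \<le> 1"
  proof (cases "cmod (f y) \<le> d")
    case True thus ?thesis using assms by simp
  next
    case False thus ?thesis using assms by (simp add: max_def divide_le_eq_1)
  qed
  moreover have "0 \<le> max 0 (cmod (f y) - d) / max (cmod (f y)) d" using assms by (intro divide_nonneg_nonneg) auto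
  ultimately show ?thesis unfolding trunc_def norm_mult norm_of_real
    by (intro mult_left_le) auto
qed

lemma trunc_err: assumes "0 < d" shows "cmod (f y - trunc d f y) \<le> d"
proof (cases "cmod (f y) \<le> d")
  case True thus ?thesis unfolding trunc_def using assms by simp
next
  case False
  hence r: "cmod (f y) > d" by simp
  have "f y - trunc d f y = f y * complex_of_real (1 - (cmod (f y) - d) / cmod (f y))"
    unfolding trunc_def using r by (simp add: max_def algebra_simps)
  also have "1 - (cmod (f y) - d) / cmod (f y) = d / cmod (f y)"
  proof -
    have "cmod (f y) \<noteq> 0" using r assms by linarith
    thus ?thesis by (simp add: diff_divide_distrib)
  qed
  finally have "cmod (f y - trunc d f y) = cmod (f y) * \<bar>d / cmod (f y)\<bar>"
    by (simp only: norm_mult norm_of_real)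
  also have "\<dots> = d"
  proof -
    have nz: "cmod (f y) \<noteq> 0" using r assms by linarith
    thus ?thesis using r assms by simp
  qed
  finally show ?thesis by simp
qed

lemma trunc_zero: assumes "cmod (f y) \<le> d" shows "trunc d f y = 0"
  unfolding trunc_def using assms by simp

lemma C0_level_compact:
  assumes "f \<in> C0" "0 < d" shows "compact {y. d \<le> cmod (f y)}"
proof -
  from assms obtain K where K: "compact K" "\<forall>x. x \<notin> K \<longrightarrow> cmod (f x) < d" and c: "continuous_on UNIV f"
    unfolding C0_def by blast
  have cl: "closed {y. d \<le> cmod (f y)}"
    by (rule closed_Collect_le) (auto intro!: continuous_intros c)
  have "{y. d \<le> cmod (f y)} = K \<inter> {y. d \<le> cmod (f y)}" using K by force
  thus ?thesis using compact_Int_closed[OF K(1) cl] by simp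
qed



lemma fc_01: "0 \<le> fc K n" "fc K n \<le> 1"
  unfolding fc_def by auto

lemma fc_0: "fc K 0 = 1" unfolding fc_def by simp

lemma fc_gt: "K < n \<Longrightarrow> fc K n = 0" unfolding fc_def by simp

lemma one_minus_fc: "n < D \<Longrightarrow> 1 - fc K n \<le> real D / real (Suc K)"
proof (cases "n \<le> K")
  case True
  assume "n < D"
  hence "real n \<le> real D" by simp
  hence "real n / real (Suc K) \<le> real D / real (Suc K)" by (simp add: divide_right_mono)
  thus ?thesis using True unfolding fc_def by simp
next
  case False
  assume "n < D"
  hence "real (Suc K) \<le> real D" using False by simp
  hence "1 \<le> real D / real (Suc K)" by simp
  thus ?thesis using False unfolding fc_def by simp
qed

lemma eps_zero: assumes "\<And>e. 0 < e \<Longrightarrow> cmod z \<le> e" shows "z = 0"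
proof (rule ccontr)
  assume "z \<noteq> 0"
  hence "0 < cmod z / 2" by simp
  from assms[OF this] show False using \<open>z \<noteq> 0\<close> by simp
qed

lemma closure_part:
  assumes lim: "is_limit \<gamma>" and it: "iterated_nonwandering \<phi> Xs"
  shows "sc_closure \<phi> (\<Union>\<beta>\<in>{\<beta>. \<beta> < \<gamma>}. sc_ideal \<phi> (Xs \<beta>)) \<subseteq> sc_ideal \<phi> (Xs \<gamma>)"
proof
  fix F assume F: "F \<in> sc_closure \<phi> (\<Union>\<beta>\<in>{\<beta>. \<beta> < \<gamma>}. sc_ideal \<phi> (Xs \<beta>))"
  have XG: "Xs \<gamma> = (\<Inter>j\<in>{j. j < \<gamma>}. Xs j)" using it lim unfolding iterated_nonwandering_def by blast
  have small: "cmod (F n x) \<le> e" if "0 < e" "n = 0 \<or> x \<in> Xs \<gamma>" for n x e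
  proof -
    obtain G where G: "G \<in> (\<Union>\<beta>\<in>{\<beta>. \<beta> < \<gamma>}. sc_ideal \<phi> (Xs \<beta>))"
      "sc_norm \<phi> (\<lambda>n y. F n y - G n y) < ereal e"
      using F \<open>0 < e\<close> unfolding sc_closure_def by blast
    then obtain \<beta> where b: "\<beta> < \<gamma>" "G \<in> sc_ideal \<phi> (Xs \<beta>)" by blast
    have "G n x = 0"
    proof (cases "n = 0")
      case True thus ?thesis using b unfolding sc_ideal_def by simp
    next
      case False
      hence "x \<in> Xs \<beta>" using that XG b by auto
      thus ?thesis using b False unfolding sc_ideal_def by auto
    qed
    moreover have "cmod (F n x - G n x) \<le> e" using bnd_coeff[OF norm_lt_bnd[OF G(2)]] by simp
    ultimately show ?thesis by simp
  qed
  have "F \<in> semicrossed \<phi>" using F unfolding sc_closure_def by blast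
  moreover have "F 0 = (\<lambda>_. 0)" using small eps_zero by blast
  moreover have "\<forall>n\<ge>1. \<forall>x\<in>Xs \<gamma>. F n x = 0" using small eps_zero by blast
  ultimately show "F \<in> sc_ideal \<phi> (Xs \<gamma>)" unfolding sc_ideal_def by blast
qed



lemma find_beta:
  assumes lim: "is_limit \<gamma>" and it: "iterated_nonwandering \<phi> Xs"
    and S: "compact S" "S \<inter> Xs \<gamma> = {}"
  shows "\<exists>\<beta><\<gamma>. S \<inter> Xs \<beta> = {}"
proof (rule ccontr)
  assume "\<not> ?thesis"
  hence ne: "\<And>\<beta>. \<beta> < \<gamma> \<Longrightarrow> S \<inter> Xs \<beta> \<noteq> {}" by blast
  have XG: "Xs \<gamma> = \<Inter>(Xs ` {j. j < \<gamma>})" using it lim unfolding iterated_nonwandering_def by blast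
  obtain b0 where b0: "b0 < \<gamma>" using lim unfolding is_limit_def by blast
  have "S \<inter> \<Inter>(Xs ` {j. j < \<gamma>}) \<noteq> {}"
  proof (rule compact_imp_fip[OF S(1)])
    fix T assume "T \<in> Xs ` {j. j < \<gamma>}" thus "closed T" using Xs_closed[OF it] by blast
  next
    fix F' assume F': "finite F'" "F' \<subseteq> Xs ` {j. j < \<gamma>}"
    then obtain B where B: "B \<subseteq> {j. j < \<gamma>}" "finite B" "F' = Xs ` B"
      using finite_subset_image by metis
    show "S \<inter> \<Inter>F' \<noteq> {}"
    proof (cases "B = {}")
      case True thus ?thesis using B ne[OF b0] by auto
    next
      case False
      define m where "m = Max B"
      have m: "m \<in> B" "\<And>b. b \<in> B \<Longrightarrow> b \<le> m" using False B(2) unfolding m_def by auto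
      have "Xs m \<subseteq> \<Inter>F'" using m Xs_anti[OF it] B(3) by blast
      moreover have "S \<inter> Xs m \<noteq> {}" using ne m B(1) by blast
      ultimately show ?thesis by blast
    qed
  qed
  thus False using S(2) XG by simp
qed

lemma poly_D: assumes "sc_poly P" shows "\<exists>D. \<forall>n\<ge>D. P n = (\<lambda>_. 0)"
proof -
  have "finite {n. P n \<noteq> (\<lambda>_. 0)}" using assms unfolding sc_poly_def by blast
  then obtain D where "{n. P n \<noteq> (\<lambda>_. 0)} \<subseteq> {..<D}" using finite_nat_bounded by blast
  thus ?thesis by (intro exI[of _ D]) auto
qed

lemma poly_B: assumes "sc_poly P" shows "\<exists>Bf. \<forall>n. 0 \<le> Bf n \<and> (\<forall>y. cmod (P n y) \<le> Bf n)"
proof -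
  have "\<forall>n. \<exists>B. 0 \<le> B \<and> (\<forall>y. cmod (P n y) \<le> B)"
    using assms C0_bounded unfolding sc_poly_def by blast
  thus ?thesis by (rule choice)
qed



lemma approx:
  assumes lim: "is_limit \<gamma>" and it: "iterated_nonwandering \<phi> Xs"
    and F: "F \<in> sc_ideal \<phi> (Xs \<gamma>)" and e: "0 < e"
  shows "\<exists>G. (\<exists>\<beta><\<gamma>. G \<in> sc_ideal \<phi> (Xs \<beta>)) \<and> sc_norm \<phi> (\<lambda>n y. F n y - G n y) < ereal e"
proof -
  define e1 where "e1 = e / 8"
  have e1: "0 < e1" using e unfolding e1_def by simp
  have Fs: "F \<in> semicrossed \<phi>" and F0: "F 0 = (\<lambda>_. 0)" and Fz: "\<And>n x. 1 \<le> n \<Longrightarrow> x \<in> Xs \<gamma> \<Longrightarrow> F n x = 0"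
    using F unfolding sc_ideal_def by auto
  have Fzero: "F n x = 0" if "n = 0 \<or> x \<in> Xs \<gamma>" for n x
    using that F0 Fz by (cases "n = 0") auto
  obtain P where P: "sc_poly P" "sc_norm \<phi> (\<lambda>n y. F n y - P n y) < ereal e1"
    using Fs e1 unfolding semicrossed_def by blast
  have b1: "bnd \<phi> (\<lambda>n y. F n y - P n y) e1" using norm_lt_bnd[OF P(2)] .
  obtain D where D: "\<And>n. D \<le> n \<Longrightarrow> P n = (\<lambda>_. 0)" using poly_D[OF P(1)] by blast
  obtain Bf where Bf: "\<And>n. 0 \<le> Bf n" "\<And>n y. cmod (P n y) \<le> Bf n" using poly_B[OF P(1)] by blast
  define Bt where "Bt = (\<Sum>n<D. Bf n)"
  have Bt0: "0 \<le> Bt" unfolding Bt_def by (simp add: sum_nonneg Bf)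
  define K where "K = nat \<lceil>real D * Bt / e1\<rceil>"
  have "real D * Bt / e1 \<le> real K" unfolding K_def by linarith
  hence "real D * Bt \<le> e1 * real K" using e1 by (simp add: divide_le_eq mult.commute)
  hence "real D * Bt \<le> e1 * real (Suc K)" using e1 by (simp add: distrib_left)
  hence DK: "real D / real (Suc K) * Bt \<le> e1" by (simp add: field_simps)
  define b2 where "b2 n = (if n < D then real D / real (Suc K) * Bf n else 0)" for n
  have b2: "bnd \<phi> (\<lambda>n y. complex_of_real (1 - fc K n) * P n y) e1"
  proof (rule bnd2_bnd[OF schur[of _ b2 D]])
    fix n y
    show "cmod (complex_of_real (1 - fc K n) * P n y) \<le> b2 n"
    proof (cases "n < D")
      case True
      have "cmod (complex_of_real (1 - fc K n) * P n y) = (1 - fc K n) * cmod (P n y)"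
        by (simp only: norm_mult norm_of_real) (use fc_01[of K n] in simp)
      also have "\<dots> \<le> real D / real (Suc K) * Bf n"
        by (rule mult_mono[OF one_minus_fc[OF True] Bf(2)]) (use fc_01[of K n] in auto)
      finally show ?thesis unfolding b2_def using True by simp
    next
      case False thus ?thesis using D[of n] unfolding b2_def by simp
    qed
  next
    show "\<And>n. 0 \<le> b2 n" unfolding b2_def using Bf(1) by simp
  next
    show "\<And>n. D \<le> n \<Longrightarrow> b2 n = 0" unfolding b2_def by simp
  next
    have "(\<Sum>n<D. b2 n) = real D / real (Suc K) * Bt" unfolding b2_def Bt_def by (simp add: sum_distrib_left)
    thus "(\<Sum>n<D. b2 n) \<le> e1" using DK by simp
  next
    show "0 \<le> e1" using e1 by simp
  qed
  have b3: "bnd \<phi> (\<lambda>n y. complex_of_real (fc K n) * (P n y - F n y)) e1"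
  proof -
    have "bnd \<phi> (\<lambda>n y. - (F n y - P n y)) e1" by (rule bnd_neg[OF b1])
    hence "bnd2 \<phi> (\<lambda>n y. P n y - F n y) e1" by (simp add: bnd_bnd2)
    thus ?thesis using e1 by (intro bnd2_bnd fejer) auto
  qed
  define e2 where "e2 = e1 / (2 * real (Suc K))"
  have e2: "0 < e2" using e1 unfolding e2_def by simp
  have e2e1: "e2 \<le> e1"
  proof -
    have "e1 / (2 * real (Suc K)) \<le> e1 / 1" by (rule divide_left_mono) (use e1 in auto)
    thus ?thesis unfolding e2_def by simp
  qed
  obtain P' where P': "sc_poly P'" "sc_norm \<phi> (\<lambda>n y. F n y - P' n y) < ereal e2"
    using Fs e2 unfolding semicrossed_def by blast
  have b4': "bnd \<phi> (\<lambda>n y. F n y - P' n y) e2" using norm_lt_bnd[OF P'(2)] .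
  have b4: "bnd \<phi> (\<lambda>n y. complex_of_real (fc K n) * (F n y - P' n y)) e2"
    using bnd2_bnd[OF fejer[OF bnd_bnd2[OF b4']]] e2 by simp
  define d where "d = 2 * e2"
  have d: "0 < d" using e2 unfolding d_def by simp
  have P'C0: "P' n \<in> C0" for n using P'(1) unfolding sc_poly_def by blast
  have P'small: "cmod (P' n y) \<le> e2" if "n = 0 \<or> y \<in> Xs \<gamma>" for n y
    using bnd_coeff[OF b4', of n y] Fzero[OF that] by simp
  define S where "S = (\<Union>n\<in>{..K}. {y. d \<le> cmod (P' n y)})"
  have cS: "compact S" unfolding S_def
    by (intro compact_UN) (auto intro: C0_level_compact[OF P'C0 d])
  have "S \<inter> Xs \<gamma> = {}"
  proof -
    have lt: "cmod (P' n y) < d" if "y \<in> Xs \<gamma>" for n y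
      using P'small[of n y] that e2 unfolding d_def by simp
    have False if y: "y \<in> S" "y \<in> Xs \<gamma>" for y
    proof -
      obtain n where "d \<le> cmod (P' n y)" using y(1) unfolding S_def by blast
      with lt[OF y(2), of n] show False by simp
    qed
    thus ?thesis by blast
  qed
  then obtain \<beta> where \<beta>: "\<beta> < \<gamma>" "S \<inter> Xs \<beta> = {}" using find_beta[OF lim it cS] by blast
  define G where "G n = (if n = 0 then (\<lambda>_. 0) else trunc d (\<lambda>y. complex_of_real (fc K n) * P' n y))" for n
  have cmod_fcP: "cmod (complex_of_real (fc K n) * P' n y) \<le> cmod (P' n y)" for n y
    using fc_01[of K n] by (simp add: norm_mult mult_left_le_one_le)
  define b5 where "b5 n = (if n \<le> K then d else 0)" for n
  have b5: "bnd \<phi> (\<lambda>n y. complex_of_real (fc K n) * P' n y - G n y) e1"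
  proof (rule bnd2_bnd[OF schur[of _ b5 "Suc K"]])
    fix n y
    show "cmod (complex_of_real (fc K n) * P' n y - G n y) \<le> b5 n"
    proof (cases "n = 0")
      case True thus ?thesis using P'small[of 0 y] e2 unfolding G_def b5_def d_def by (simp add: fc_0)
    next
      case False
      show ?thesis
      proof (cases "n \<le> K")
        case True thus ?thesis using False trunc_err[OF d] unfolding G_def b5_def by simp
      next
        case nK: False
        hence "fc K n = 0" by (simp add: fc_gt)
        thus ?thesis using False nK d unfolding G_def b5_def by (simp add: trunc_zero)
      qed
    qed
  next
    show "\<And>n. 0 \<le> b5 n" unfolding b5_def using d by simp
  next
    show "\<And>n. Suc K \<le> n \<Longrightarrow> b5 n = 0" unfolding b5_def by simp
  next
    have "(\<Sum>n<Suc K. b5 n) = real (Suc K) * d" unfolding b5_def by simp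
    also have "\<dots> = e1" unfolding d_def e2_def by (simp add: field_simps)
    finally show "(\<Sum>n<Suc K. b5 n) \<le> e1" by simp
  next
    show "0 \<le> e1" using e1 by simp
  qed
  have tot: "bnd \<phi> (\<lambda>n y. (F n y - P n y) + ((complex_of_real (1 - fc K n) * P n y)
      + ((complex_of_real (fc K n) * (P n y - F n y)) + ((complex_of_real (fc K n) * (F n y - P' n y))
      + (complex_of_real (fc K n) * P' n y - G n y))))) (e1 + (e1 + (e1 + (e2 + e1))))"
    by (intro bnd_add b1 b2 b3 b4 b5)
  have eqF: "(\<lambda>n y. (F n y - P n y) + ((complex_of_real (1 - fc K n) * P n y)
      + ((complex_of_real (fc K n) * (P n y - F n y)) + ((complex_of_real (fc K n) * (F n y - P' n y))
      + (complex_of_real (fc K n) * P' n y - G n y))))) = (\<lambda>n y. F n y - G n y)"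
    by (intro ext) (simp add: algebra_simps)
  have "sc_norm \<phi> (\<lambda>n y. F n y - G n y) \<le> ereal (e1 + (e1 + (e1 + (e2 + e1))))"
    using bnd_norm_le[OF tot] unfolding eqF .
  also have "\<dots> < ereal e" using e2e1 e1 unfolding e1_def by simp
  finally have nG: "sc_norm \<phi> (\<lambda>n y. F n y - G n y) < ereal e" .
  have GC0: "G n \<in> C0" for n
  proof (cases "n = 0")
    case True
    show ?thesis unfolding G_def using True by (intro C0_dom[OF P'C0[of 0]]) auto
  next
    case False
    have c: "continuous_on UNIV (\<lambda>y. complex_of_real (fc K n) * P' n y)"
      using P'C0[of n] unfolding C0_def by (auto intro!: continuous_intros)
    have le: "cmod (trunc d (\<lambda>y. complex_of_real (fc K n) * P' n y) y) \<le> cmod (P' n y)" for y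
      using trunc_le[OF d, of "\<lambda>y. complex_of_real (fc K n) * P' n y" y] cmod_fcP[of n y] by simp
    have "trunc d (\<lambda>y. complex_of_real (fc K n) * P' n y) \<in> C0"
      by (rule C0_dom[OF P'C0[of n] trunc_cont[OF c d] le])
    thus ?thesis unfolding G_def using False by simp
  qed
  have Gsupp: "{n. G n \<noteq> (\<lambda>_. 0)} \<subseteq> {n. P' n \<noteq> (\<lambda>_. 0)}"
  proof
    fix n assume "n \<in> {n. G n \<noteq> (\<lambda>_. 0)}"
    thus "n \<in> {n. P' n \<noteq> (\<lambda>_. 0)}"
      using d unfolding G_def by (auto simp: trunc_def)
  qed
  have Gpoly: "sc_poly G" unfolding sc_poly_def
    using GC0 finite_subset[OF Gsupp] P'(1) unfolding sc_poly_def by blast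
  have Gsc: "G \<in> semicrossed \<phi>" unfolding semicrossed_def mem_Collect_eq
  proof (intro allI impI)
    fix e' :: real assume "0 < e'"
    have "sc_norm \<phi> (\<lambda>n y. G n y - G n y) \<le> ereal 0" using bnd_norm_le[OF bnd_zero] by simp
    hence "sc_norm \<phi> (\<lambda>n y. G n y - G n y) < ereal e'" using \<open>0 < e'\<close> by (simp add: le_less_trans)
    thus "\<exists>P. sc_poly P \<and> sc_norm \<phi> (\<lambda>n y. G n y - P n y) < ereal e'" using Gpoly by blast
  qed
  have Gz: "G n y = 0" if "1 \<le> n" "y \<in> Xs \<beta>" for n y
  proof (cases "n \<le> K")
    case True
    hence "y \<notin> {y. d \<le> cmod (P' n y)}" using \<beta>(2) that unfolding S_def by blast
    hence "cmod (complex_of_real (fc K n) * P' n y) \<le> d" using cmod_fcP[of n y] by simp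
    thus ?thesis using that unfolding G_def by (simp add: trunc_zero)
  next
    case False
    thus ?thesis using that d unfolding G_def by (simp add: fc_gt trunc_zero)
  qed
  have "G \<in> sc_ideal \<phi> (Xs \<beta>)" unfolding sc_ideal_def using Gsc Gz by (simp add: G_def)
  thus ?thesis using \<beta>(1) nG by blast
qed


theorem lemma2p4:
  fixes \<phi> :: "'a::metric_space \<Rightarrow> 'a"
    and Xs :: "'o::wellorder \<Rightarrow> 'a set"
    and \<gamma> :: 'o
  assumes "locally_compact_space (euclidean :: 'a topology)"
    and "\<exists>\<psi>. homeomorphism UNIV UNIV \<phi> \<psi>"
    and "iterated_nonwandering \<phi> Xs"
    and "\<forall>\<beta><\<gamma>. nonwandering \<phi> (Xs \<beta>) \<noteq> Xs \<beta>"
    and "is_limit \<gamma>"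
  shows "sc_ideal \<phi> (Xs \<gamma>) = sc_closure \<phi> (\<Union>\<beta>\<in>{\<beta>. \<beta> < \<gamma>}. sc_ideal \<phi> (Xs \<beta>))"
proof
  show "sc_closure \<phi> (\<Union>\<beta>\<in>{\<beta>. \<beta> < \<gamma>}. sc_ideal \<phi> (Xs \<beta>)) \<subseteq> sc_ideal \<phi> (Xs \<gamma>)"
    by (rule closure_part[OF assms(5) assms(3)])
next
  show "sc_ideal \<phi> (Xs \<gamma>) \<subseteq> sc_closure \<phi> (\<Union>\<beta>\<in>{\<beta>. \<beta> < \<gamma>}. sc_ideal \<phi> (Xs \<beta>))"
  proof
    fix F assume F: "F \<in> sc_ideal \<phi> (Xs \<gamma>)"
    have "F \<in> semicrossed \<phi>" using F unfolding sc_ideal_def by blast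
    moreover have "\<forall>e>0. \<exists>G\<in>(\<Union>\<beta>\<in>{\<beta>. \<beta> < \<gamma>}. sc_ideal \<phi> (Xs \<beta>)).
        sc_norm \<phi> (\<lambda>n y. F n y - G n y) < ereal e"
    proof (intro allI impI)
      fix e :: real assume "0 < e"
      from approx[OF assms(5) assms(3) F this] obtain G \<beta> where
        "\<beta> < \<gamma>" "G \<in> sc_ideal \<phi> (Xs \<beta>)" "sc_norm \<phi> (\<lambda>n y. F n y - G n y) < ereal e" by blast
      thus "\<exists>G\<in>(\<Union>\<beta>\<in>{\<beta>. \<beta> < \<gamma>}. sc_ideal \<phi> (Xs \<beta>)).
        sc_norm \<phi> (\<lambda>n y. F n y - G n y) < ereal e" by blast
    qed
    ultimately show "F \<in> sc_closure \<phi> (\<Union>\<beta>\<in>{\<beta>. \<beta> < \<gamma>}. sc_ideal \<phi> (Xs \<beta>))"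
      unfolding sc_closure_def by blast
  qed
qed

end
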